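(* Under the hypotheses of theorem:ConvergenceRatesSparsityFull (with $1\le p\le2$), one has $\|s^\alpha-s^\ast\|=\mathcal{O}(\sqrt{\delta+\epsilon})$ as $\delta+\epsilon\to0$.
   Context: The hypotheses are: sparsity setting with $X,Y,Z$ Hilbert spaces, $B:X\times Y\to Z$ bilinear with $\|B(c,s)\|\le C\|c\|\|s\|$ and sequentially weak-weak continuous, $P:Y\to Y_n\subset Y$ linear bounded ($Y_n$ finite-dimensional), $s_{\mathrm{calib}}\in Y_n$, $\mathcal{R}_s:Y\to[0,\infty)$ proper convex weakly lower semi-continuous, $\{\varphi_i\}$ an orthonormal basis of $X$, $1\le w_i<\infty$, $\Phi_p(c)=\sum_iw_i|\langle c,\varphi_i\rangle|^p$, fixed $\gamma>0$, $\nu_1,\nu_2>0$, $\tilde{\mathcal{R}}(c,s)=\Phi_p(c)+\frac{\nu_2}{2}\|P(s)-s_{\mathrm{calib}}\|^2+\nu_1\mathcal{R}_s(s)$, $J^{u,s_m}_{\alpha,\beta,\mu}(c,s)=\frac12\|B(c,s)-u\|^2+\frac{\gamma}{2}\|s-s_m\|^2+\frac{\mu}{2}\|P(s)-s_{\mathrm{calib}}\|^2+\alpha\Phi_p(c)+\beta\mathcal{R}_s(s)$; $u^\ast=B(c^\ast,s^\ast)$ with $c^\ast\in\arg\min\{\Phi_p(c):B(c,s^\ast)=u^\ast\}$ and $\Phi_p(c^\ast)<\infty$; $\|u^\ast-u_\delta\|\le\delta$, $\|s^\ast-s_{\mathrm{mod},\epsilon}\|\le\epsilon$; there exist $\kappa_1\in[0,1)$,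 $\kappa_2\ge0$, $0\le\kappa_3<\min\{1,\gamma/(2\alpha_{\max})\}$, $\xi^\ast\in\partial\tilde{\mathcal{R}}(c^\ast,s^\ast)$ with $\langle\xi^\ast,(c^\ast-c,s^\ast-s)\rangle\le\kappa_1D^{\xi^\ast}_{\tilde{\mathcal{R}}}((c,s),(c^\ast,s^\ast))+\kappa_2\|B(c,s)-B(c^\ast,s^\ast)\|+\kappa_3\|s-s^\ast\|^2$ for all $(c,s)$, where $D^{\xi}_{\mathcal{R}}(x,x^\ast)=\mathcal{R}(x)-\mathcal{R}(x^\ast)-\langle\xi,x-x^\ast\rangle$; $(c^\alpha,s^\alpha)$ minimizes $J^{u_\delta,s_{\mathrm{mod},\epsilon}}_{\alpha,\nu_1\alpha,\nu_2\alpha}$, $0<\alpha\le\alpha_{\max}$, and $m(\delta+\epsilon)\le\alpha\le M(\delta+\epsilon)$ for constants $0<m\le M$. *)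

theory Defs
  imports "HOL-Analysis.Analysis"
begin

definition weakly_conv :: "(nat \<Rightarrow> 'a::real_inner) \<Rightarrow> 'a \<Rightarrow> bool" where
  "weakly_conv x l \<longleftrightarrow> (\<forall>v. (\<lambda>n. x n \<bullet> v) \<longlonglongrightarrow> l \<bullet> v)"

definition weakly_lsc :: "('a::real_inner \<Rightarrow> real) \<Rightarrow> bool" where
  "weakly_lsc R \<longleftrightarrow>
     (\<forall>x l. weakly_conv x l \<longrightarrow> ereal (R l) \<le> liminf (\<lambda>n. ereal (R (x n))))"

definition orthonormal_basis :: "('i \<Rightarrow> 'a::real_inner) \<Rightarrow> bool" where
  "orthonormal_basis \<phi> \<longleftrightarrow>
     (\<forall>i. norm (\<phi> i) = 1) \<and> (\<forall>i j. i \<noteq> j \<longrightarrow> \<phi> i \<bullet> \<phi> j = 0) \<and>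
     closure (span (range \<phi>)) = UNIV"

definition Phi :: "('i \<Rightarrow> real) \<Rightarrow> ('i \<Rightarrow> 'a::real_inner) \<Rightarrow> real \<Rightarrow> 'a \<Rightarrow> ereal" where
  "Phi w \<phi> p c = enn2ereal (infsum (\<lambda>i. ennreal (w i * \<bar>c \<bullet> \<phi> i\<bar> powr p)) UNIV)"

definition subgrad :: "('a::real_inner \<Rightarrow> ereal) \<Rightarrow> 'a \<Rightarrow> 'a \<Rightarrow> bool" where
  "subgrad R x0 \<xi> \<longleftrightarrow> \<bar>R x0\<bar> \<noteq> \<infinity> \<and> (\<forall>x. R x0 + ereal (\<xi> \<bullet> (x - x0)) \<le> R x)"

definition bregman :: "('a::real_inner \<Rightarrow> ereal) \<Rightarrow> 'a \<Rightarrow> 'a \<Rightarrow> 'a \<Rightarrow> ereal" where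
  "bregman R \<xi> x x0 = R x - R x0 - ereal (\<xi> \<bullet> (x - x0))"

definition Rtilde :: "('i \<Rightarrow> real) \<Rightarrow> ('i \<Rightarrow> 'x::real_inner) \<Rightarrow> real \<Rightarrow> ('y::real_normed_vector \<Rightarrow> 'y)
    \<Rightarrow> 'y \<Rightarrow> ('y \<Rightarrow> real) \<Rightarrow> real \<Rightarrow> real \<Rightarrow> 'x \<times> 'y \<Rightarrow> ereal" where
  "Rtilde w \<phi> p P scal Rs \<nu>1 \<nu>2 cs =
     Phi w \<phi> p (fst cs) + ereal (\<nu>2 / 2 * (norm (P (snd cs) - scal))\<^sup>2 + \<nu>1 * Rs (snd cs))"

definition Jfun :: "('x::real_inner \<Rightarrow> 'y::real_inner \<Rightarrow> 'z::real_normed_vector) \<Rightarrow> ('i \<Rightarrow> real)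
    \<Rightarrow> ('i \<Rightarrow> 'x) \<Rightarrow> real \<Rightarrow> ('y \<Rightarrow> 'y) \<Rightarrow> 'y \<Rightarrow> ('y \<Rightarrow> real) \<Rightarrow> real
    \<Rightarrow> 'z \<Rightarrow> 'y \<Rightarrow> real \<Rightarrow> real \<Rightarrow> real \<Rightarrow> 'x \<Rightarrow> 'y \<Rightarrow> ereal" where
  "Jfun B w \<phi> p P scal Rs \<gamma> u sm \<alpha> \<beta> \<mu> c s =
     ereal (1/2 * (norm (B c s - u))\<^sup>2 + \<gamma>/2 * (norm (s - sm))\<^sup>2
            + \<mu>/2 * (norm (P s - scal))\<^sup>2 + \<beta> * Rs s)
     + ereal \<alpha> * Phi w \<phi> p c"

end

theory Submission
  imports Defs
begin

lemma core:
  fixes a b d g \<delta> \<epsilon> \<alpha> e \<gamma> \<kappa>2 \<kappa>3 \<alpha>max M Ra Rs X Dp :: real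
  assumes g0: "\<gamma> > 0" and k2: "\<kappa>2 \<ge> 0" and k3: "\<kappa>3 \<ge> 0" "\<kappa>3 * \<alpha>max < \<gamma>/2"
    and a0: "a \<ge> 0" and b0: "b \<ge> 0" and d0: "d \<ge> 0"
    and al: "0 < \<alpha>" "\<alpha> \<le> \<alpha>max" "\<alpha> \<le> M * e"
    and de: "0 \<le> \<delta>" "0 \<le> \<epsilon>" "\<delta> \<le> e" "\<epsilon> \<le> e" "e \<le> 1"
    and h1: "b\<^sup>2/2 + \<gamma>/2 * d\<^sup>2 + \<alpha> * Ra \<le> \<delta>\<^sup>2/2 + \<gamma>/2*\<epsilon>\<^sup>2 + \<alpha> * Rs"
    and h2: "Ra - Rs \<ge> - \<kappa>2 * g - \<kappa>3 * a\<^sup>2"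
    and h4: "g \<le> b + \<delta>"
    and h5: "a \<le> d + \<epsilon>"
  shows "a\<^sup>2 \<le> ((1/2 + \<gamma>/2 + M\<^sup>2*\<kappa>2\<^sup>2/2 + M*\<kappa>2 + \<gamma>/(2*((\<gamma>/2 - \<kappa>3*\<alpha>max)/(\<gamma>/2+\<kappa>3*\<alpha>max)))) / ((\<gamma>/2 - \<kappa>3*\<alpha>max)/2)) * e"
proof -
  define h where "h = (\<gamma>/2 - \<kappa>3*\<alpha>max)/(\<gamma>/2+\<kappa>3*\<alpha>max)"
  define c0 where "c0 = (\<gamma>/2 - \<kappa>3*\<alpha>max)/2"
  define C where "C = 1/2 + \<gamma>/2 + M\<^sup>2*\<kappa>2\<^sup>2/2 + M*\<kappa>2 + \<gamma>/(2*h)"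
  have kam: "\<kappa>3*\<alpha>max \<ge> 0" using k3 al by simp
  have hpos: "h > 0" unfolding h_def using k3 kam g0 by (intro divide_pos_pos) auto
  have c0pos: "c0 > 0" unfolding c0_def using k3 by simp
  have e0: "e \<ge> 0" using de by simp
  have M0: "M \<ge> 0" using al e0 by (smt (verit) mult_nonpos_nonneg)
  have s1: "\<alpha> * (Ra - Rs) \<ge> \<alpha> * (- \<kappa>2 * (b + \<delta>) - \<kappa>3 * a\<^sup>2)"
  proof -
    have "- \<kappa>2 * g - \<kappa>3 * a\<^sup>2 \<ge> - \<kappa>2 * (b + \<delta>) - \<kappa>3 * a\<^sup>2"
      using h4 k2 by (simp add: mult_left_mono)
    with h2 show ?thesis using al by (intro mult_left_mono) auto
  qed
  have s2: "\<alpha>*\<kappa>2*b \<le> b\<^sup>2/2 + (\<alpha>*\<kappa>2)\<^sup>2/2"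
  proof -
    have "0 \<le> (b - \<alpha>*\<kappa>2)\<^sup>2" by simp
    also have "\<dots> = b\<^sup>2 + (\<alpha>*\<kappa>2)\<^sup>2 - 2*(\<alpha>*\<kappa>2*b)" by (simp add: power2_diff algebra_simps)
    finally show ?thesis by linarith
  qed
  have s3: "\<gamma>/2 * d\<^sup>2 \<le> \<delta>\<^sup>2/2 + \<gamma>/2*\<epsilon>\<^sup>2 + (\<alpha>*\<kappa>2)\<^sup>2/2 + \<alpha>*\<kappa>2*\<delta> + \<alpha>*\<kappa>3*a\<^sup>2"
    using h1 s1 s2 by (simp add: algebra_simps)
  have s4: "a\<^sup>2 \<le> (1+h)*d\<^sup>2 + (1+1/h)*\<epsilon>\<^sup>2"
  proof -
    have "a\<^sup>2 \<le> (d+\<epsilon>)\<^sup>2" using a0 h5 by (simp add: power_mono)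
    moreover have "(d+\<epsilon>)\<^sup>2 \<le> (1+h)*d\<^sup>2 + (1+1/h)*\<epsilon>\<^sup>2"
    proof -
      have "0 \<le> (h*d - \<epsilon>)\<^sup>2 / h" using hpos by simp
      also have "\<dots> = h*d\<^sup>2 - 2*d*\<epsilon> + \<epsilon>\<^sup>2/h" using hpos
        by (simp add: power2_eq_square field_simps)
      finally show ?thesis by (simp add: power2_eq_square field_simps)
    qed
    ultimately show ?thesis by simp
  qed
  have r: "1 + h = \<gamma> / (\<gamma>/2+\<kappa>3*\<alpha>max)" unfolding h_def using kam g0
    by (simp add: field_simps)
  have s5: "\<gamma>/(2*(1+h)) = \<gamma>/4 + \<kappa>3*\<alpha>max/2" unfolding r using g0 kam by (simp add: field_simps)
  have s6: "\<gamma>/2 * d\<^sup>2 \<ge> \<gamma>/(2*(1+h)) * a\<^sup>2 - \<gamma>/(2*h) * \<epsilon>\<^sup>2"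
  proof -
    have "\<gamma>/(2*(1+h)) * a\<^sup>2 \<le> \<gamma>/(2*(1+h)) * ((1+h)*d\<^sup>2 + (1+1/h)*\<epsilon>\<^sup>2)"
      using s4 g0 hpos by (intro mult_left_mono) auto
    also have "\<dots> = \<gamma>/2 * d\<^sup>2 + \<gamma>/(2*h) * \<epsilon>\<^sup>2"
    proof -
      have hp1: "1 + h \<noteq> 0" "2 + 2*h \<noteq> 0" "h * 2 + h * (h * 2) \<noteq> 0" using hpos by (simp_all add: add_pos_pos) (smt (verit) mult_pos_pos)
      have q: "1+1/h = (1+h)/h" using hpos by (simp add: field_simps)
      have "\<gamma>/(2*(1+h)) * ((1+h)*d\<^sup>2) = \<gamma>/2 * d\<^sup>2" using hp1 by (simp add: field_simps)
      moreover have "\<gamma>/(2*(1+h)) * ((1+h)/h*\<epsilon>\<^sup>2) = \<gamma>/(2*h) * \<epsilon>\<^sup>2" using hp1 hpos by (simp add: field_simps)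
      ultimately show ?thesis unfolding q by (simp add: distrib_left)
    qed
    finally show ?thesis by linarith
  qed
  have ak3: "\<alpha>*\<kappa>3 \<le> \<kappa>3*\<alpha>max" using al k3 by (simp add: mult_right_mono mult.commute)
  have s7: "c0 * a\<^sup>2 \<le> (\<gamma>/(2*(1+h)) - \<alpha>*\<kappa>3) * a\<^sup>2"
    unfolding c0_def s5 using ak3 by (intro mult_right_mono) (auto simp: mult.commute)
  have s8: "(\<gamma>/(2*(1+h)) - \<alpha>*\<kappa>3) * a\<^sup>2 \<le> \<delta>\<^sup>2/2 + \<gamma>/2*\<epsilon>\<^sup>2 + (\<alpha>*\<kappa>2)\<^sup>2/2 + \<alpha>*\<kappa>2*\<delta> + \<gamma>/(2*h) * \<epsilon>\<^sup>2"
  proof -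
    have "(\<gamma>/(2*(1+h)) - \<alpha>*\<kappa>3) * a\<^sup>2 = \<gamma>/(2*(1+h)) * a\<^sup>2 - \<alpha>*\<kappa>3*a\<^sup>2"
      by (simp add: left_diff_distrib)
    thus ?thesis using s3 s6 by linarith
  qed
  have ee: "e\<^sup>2 \<le> e" using de e0 by (simp add: power2_eq_square mult_left_le)
  have t1: "\<delta>\<^sup>2 \<le> e\<^sup>2" "\<epsilon>\<^sup>2 \<le> e\<^sup>2" using de by (simp_all add: power_mono)
  have t2: "(\<alpha>*\<kappa>2)\<^sup>2 \<le> M\<^sup>2*\<kappa>2\<^sup>2*e\<^sup>2"
  proof -
    have "\<alpha>*\<kappa>2 \<le> M*e*\<kappa>2" using al k2 by (simp add: mult_right_mono)
    hence "(\<alpha>*\<kappa>2)\<^sup>2 \<le> (M*e*\<kappa>2)\<^sup>2" using al k2 by (intro power_mono) auto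
    thus ?thesis by (simp add: power_mult_distrib algebra_simps)
  qed
  have t3: "\<alpha>*\<kappa>2*\<delta> \<le> M*\<kappa>2*e\<^sup>2"
  proof -
    have "\<alpha>*\<kappa>2*\<delta> \<le> (M*e)*\<kappa>2*e" using al k2 de
      by (intro mult_mono) (auto intro: mult_right_mono)
    thus ?thesis by (simp add: power2_eq_square algebra_simps)
  qed
  have t4: "\<gamma>/(2*h) * \<epsilon>\<^sup>2 \<le> \<gamma>/(2*h) * e\<^sup>2" using t1 g0 hpos by (intro mult_left_mono) auto
  have t5: "\<gamma>/2*\<epsilon>\<^sup>2 \<le> \<gamma>/2*e\<^sup>2" using t1 g0 by simp
  have "c0 * a\<^sup>2 \<le> C * e\<^sup>2" unfolding C_def using s7 s8 t1 t2 t3 t4 t5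
    by (simp add: algebra_simps)
  also have "\<dots> \<le> C * e" using ee hpos g0 M0 k2 unfolding C_def
    by (intro mult_left_mono) auto
  finally have "c0 * a\<^sup>2 \<le> C * e" .
  hence "a\<^sup>2 \<le> C/c0 * e" using c0pos by (simp add: field_simps)
  thus ?thesis unfolding C_def c0_def h_def .
qed

theorem mainTheorem14:
  fixes B :: "'x::{real_inner,complete_space} \<Rightarrow> 'y::{real_inner,complete_space} \<Rightarrow> 'z::{real_inner,complete_space}"
    and P :: "'y \<Rightarrow> 'y" and Yn :: "'y set" and scal :: 'y
    and Rs :: "'y \<Rightarrow> real"
    and \<phi> :: "'i \<Rightarrow> 'x" and w :: "'i \<Rightarrow> real" and p :: real
    and \<gamma> \<nu>1 \<nu>2 :: real
    and cstar :: 'x and sstar :: 'y and ustar :: 'z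
    and \<kappa>1 \<kappa>2 \<kappa>3 \<alpha>max m M :: real
    and \<xi> :: "'x \<times> 'y"
  assumes B_bil: "bounded_bilinear B"
    and B_weak: "\<And>c s c0 s0. weakly_conv c c0 \<Longrightarrow> weakly_conv s s0 \<Longrightarrow>
                   weakly_conv (\<lambda>n. B (c n) (s n)) (B c0 s0)"
    and P_lin: "bounded_linear P"
    and Yn_sub: "subspace Yn" and Yn_fin: "\<exists>A. finite A \<and> Yn = span A"
    and P_range: "range P \<subseteq> Yn"
    and scal_in: "scal \<in> Yn"
    and Rs_nonneg: "\<And>s. Rs s \<ge> 0"
    and Rs_convex: "convex_on UNIV Rs"
    and Rs_wlsc: "weakly_lsc Rs"
    and onb: "orthonormal_basis \<phi>"
    and w_ge: "\<And>i. 1 \<le> w i"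
    and p_ge: "1 \<le> p" and p_le: "p \<le> 2"
    and \<gamma>_pos: "\<gamma> > 0" and \<nu>1_pos: "\<nu>1 > 0" and \<nu>2_pos: "\<nu>2 > 0"
    and ustar_def: "ustar = B cstar sstar"
    and cstar_min: "\<And>c. B c sstar = ustar \<Longrightarrow> Phi w \<phi> p cstar \<le> Phi w \<phi> p c"
    and cstar_fin: "Phi w \<phi> p cstar < \<infinity>"
    and \<alpha>max_pos: "\<alpha>max > 0"
    and \<kappa>1: "0 \<le> \<kappa>1" "\<kappa>1 < 1"
    and \<kappa>2: "0 \<le> \<kappa>2"
    and \<kappa>3: "0 \<le> \<kappa>3" "\<kappa>3 < min 1 (\<gamma> / (2 * \<alpha>max))"
    and \<xi>_sub: "subgrad (Rtilde w \<phi> p P scal Rs \<nu>1 \<nu>2) (cstar, sstar) \<xi>"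
    and source: "\<And>c s. ereal (\<xi> \<bullet> ((cstar, sstar) - (c, s)))
        \<le> ereal \<kappa>1 * bregman (Rtilde w \<phi> p P scal Rs \<nu>1 \<nu>2) \<xi> (c, s) (cstar, sstar)
          + ereal (\<kappa>2 * norm (B c s - B cstar sstar) + \<kappa>3 * (norm (s - sstar))\<^sup>2)"
    and mM: "0 < m" "m \<le> M"
  shows "\<exists>K \<eta>. \<eta> > 0 \<and>
    (\<forall>\<delta> \<epsilon> u\<delta> sm \<alpha> c\<alpha> s\<alpha>.
       0 \<le> \<delta> \<and> 0 \<le> \<epsilon> \<and> \<delta> + \<epsilon> < \<eta> \<and>
       norm (ustar - u\<delta>) \<le> \<delta> \<and> norm (sstar - sm) \<le> \<epsilon> \<and>
       0 < \<alpha> \<and> \<alpha> \<le> \<alpha>max \<and> m * (\<delta> + \<epsilon>) \<le> \<alpha> \<and> \<alpha> \<le> M * (\<delta> + \<epsilon>) \<and>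
       (\<forall>c s. Jfun B w \<phi> p P scal Rs \<gamma> u\<delta> sm \<alpha> (\<nu>1 * \<alpha>) (\<nu>2 * \<alpha>) c\<alpha> s\<alpha>
              \<le> Jfun B w \<phi> p P scal Rs \<gamma> u\<delta> sm \<alpha> (\<nu>1 * \<alpha>) (\<nu>2 * \<alpha>) c s)
       \<longrightarrow> norm (s\<alpha> - sstar) \<le> K * sqrt (\<delta> + \<epsilon>))"
  proof -
  have Phi_nn: "\<And>c. Phi w \<phi> p c \<ge> 0" unfolding Phi_def by simp
  have k3a: "\<kappa>3 * \<alpha>max < \<gamma>/2"
  proof -
    have "\<kappa>3 < \<gamma> / (2 * \<alpha>max)" using \<kappa>3 by simp
    thus ?thesis using \<alpha>max_pos by (simp add: field_simps)
  qed
  obtain Fs where Fs: "Phi w \<phi> p cstar = ereal Fs"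
    using cstar_fin Phi_nn[of cstar] by (cases "Phi w \<phi> p cstar") auto
  define K0 where "K0 = ((1/2 + \<gamma>/2 + M\<^sup>2*\<kappa>2\<^sup>2/2 + M*\<kappa>2 + \<gamma>/(2*((\<gamma>/2 - \<kappa>3*\<alpha>max)/(\<gamma>/2+\<kappa>3*\<alpha>max)))) / ((\<gamma>/2 - \<kappa>3*\<alpha>max)/2))"
  show ?thesis
  proof (rule exI[where x="sqrt K0"], rule exI[where x="1::real"], intro conjI allI impI)
    show "(0::real) < 1" by simp
    fix \<delta> \<epsilon> :: real and u\<delta> sm \<alpha> c\<alpha> s\<alpha>
    assume H: "0 \<le> \<delta> \<and> 0 \<le> \<epsilon> \<and> \<delta> + \<epsilon> < 1 \<and>
       norm (ustar - u\<delta>) \<le> \<delta> \<and> norm (sstar - sm) \<le> \<epsilon> \<and>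
       0 < \<alpha> \<and> \<alpha> \<le> \<alpha>max \<and> m * (\<delta> + \<epsilon>) \<le> \<alpha> \<and> \<alpha> \<le> M * (\<delta> + \<epsilon>) \<and>
       (\<forall>c s. Jfun B w \<phi> p P scal Rs \<gamma> u\<delta> sm \<alpha> (\<nu>1 * \<alpha>) (\<nu>2 * \<alpha>) c\<alpha> s\<alpha>
              \<le> Jfun B w \<phi> p P scal Rs \<gamma> u\<delta> sm \<alpha> (\<nu>1 * \<alpha>) (\<nu>2 * \<alpha>) c s)"
    define e where "e = \<delta> + \<epsilon>"
    have al: "0 < \<alpha>" "\<alpha> \<le> \<alpha>max" "\<alpha> \<le> M * e" using H unfolding e_def by auto
    have de: "0 \<le> \<delta>" "0 \<le> \<epsilon>" "\<delta> \<le> e" "\<epsilon> \<le> e" "e \<le> 1" using H unfolding e_def by auto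
    have Jmin: "Jfun B w \<phi> p P scal Rs \<gamma> u\<delta> sm \<alpha> (\<nu>1 * \<alpha>) (\<nu>2 * \<alpha>) c\<alpha> s\<alpha>
              \<le> Jfun B w \<phi> p P scal Rs \<gamma> u\<delta> sm \<alpha> (\<nu>1 * \<alpha>) (\<nu>2 * \<alpha>) cstar sstar"
      using H by blast
    define Qa where "Qa = 1/2 * (norm (B c\<alpha> s\<alpha> - u\<delta>))\<^sup>2 + \<gamma>/2 * (norm (s\<alpha> - sm))\<^sup>2
            + (\<nu>2 * \<alpha>)/2 * (norm (P s\<alpha> - scal))\<^sup>2 + (\<nu>1 * \<alpha>) * Rs s\<alpha>"
    define Qs where "Qs = 1/2 * (norm (B cstar sstar - u\<delta>))\<^sup>2 + \<gamma>/2 * (norm (sstar - sm))\<^sup>2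
            + (\<nu>2 * \<alpha>)/2 * (norm (P sstar - scal))\<^sup>2 + (\<nu>1 * \<alpha>) * Rs sstar"
    have Jm2: "ereal Qa + ereal \<alpha> * Phi w \<phi> p c\<alpha> \<le> ereal (Qs + \<alpha> * Fs)"
      using Jmin unfolding Jfun_def Qa_def Qs_def Fs by simp
    obtain Fa where Fa: "Phi w \<phi> p c\<alpha> = ereal Fa"
    proof (cases "Phi w \<phi> p c\<alpha>")
      case (real r) thus ?thesis using that by simp
    next
      case PInf thus ?thesis using Jm2 al by simp
    next
      case MInf thus ?thesis using Phi_nn[of c\<alpha>] by simp
    qed
    have Jm3: "Qa + \<alpha> * Fa \<le> Qs + \<alpha> * Fs" using Jm2 unfolding Fa by simp
    define Ra where "Ra = Fa + (\<nu>2 / 2 * (norm (P s\<alpha> - scal))\<^sup>2 + \<nu>1 * Rs s\<alpha>)"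
    define Rst where "Rst = Fs + (\<nu>2 / 2 * (norm (P sstar - scal))\<^sup>2 + \<nu>1 * Rs sstar)"
    have RtA: "Rtilde w \<phi> p P scal Rs \<nu>1 \<nu>2 (c\<alpha>, s\<alpha>) = ereal Ra"
      by (simp add: Rtilde_def Ra_def Fa)
    have RtS: "Rtilde w \<phi> p P scal Rs \<nu>1 \<nu>2 (cstar, sstar) = ereal Rst"
      by (simp add: Rtilde_def Rst_def Fs)
    define a where "a = norm (s\<alpha> - sstar)"
    define b where "b = norm (B c\<alpha> s\<alpha> - u\<delta>)"
    define d where "d = norm (s\<alpha> - sm)"
    define g where "g = norm (B c\<alpha> s\<alpha> - B cstar sstar)"
    have sq1: "(norm (B cstar sstar - u\<delta>))\<^sup>2 \<le> \<delta>\<^sup>2"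
      using H ustar_def by (intro power_mono) auto
    have sq2: "(norm (sstar - sm))\<^sup>2 \<le> \<epsilon>\<^sup>2"
      using H by (intro power_mono) auto
    have h1: "b\<^sup>2/2 + \<gamma>/2 * d\<^sup>2 + \<alpha> * Ra \<le> \<delta>\<^sup>2/2 + \<gamma>/2*\<epsilon>\<^sup>2 + \<alpha> * Rst"
    proof -
      have "\<gamma>/2 * (norm (sstar - sm))\<^sup>2 \<le> \<gamma>/2 * \<epsilon>\<^sup>2" using sq2 \<gamma>_pos by simp
      thus ?thesis using Jm3 sq1 unfolding Qa_def Qs_def Ra_def Rst_def b_def d_def
        by (simp add: algebra_simps)
    qed
    define X where "X = \<xi> \<bullet> ((cstar, sstar) - (c\<alpha>, s\<alpha>))"
    have XY: "\<xi> \<bullet> ((c\<alpha>, s\<alpha>) - (cstar, sstar)) = - X"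
      unfolding X_def by (metis inner_minus_right minus_diff_eq)
    have sg: "Rst - X \<le> Ra"
    proof -
      have "ereal Rst + ereal (\<xi> \<bullet> ((c\<alpha>, s\<alpha>) - (cstar, sstar))) \<le> ereal Ra"
        using \<xi>_sub unfolding subgrad_def RtS by (metis RtA)
      thus ?thesis unfolding XY by simp
    qed
    have src: "X \<le> \<kappa>1 * (Ra - Rst + X) + (\<kappa>2 * g + \<kappa>3 * a\<^sup>2)"
    proof -
      have "ereal X \<le> ereal \<kappa>1 * bregman (Rtilde w \<phi> p P scal Rs \<nu>1 \<nu>2) \<xi> (c\<alpha>, s\<alpha>) (cstar, sstar)
          + ereal (\<kappa>2 * norm (B c\<alpha> s\<alpha> - B cstar sstar) + \<kappa>3 * (norm (s\<alpha> - sstar))\<^sup>2)"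
        using source[of c\<alpha> s\<alpha>] unfolding X_def .
      thus ?thesis unfolding bregman_def RtA RtS XY g_def a_def by simp
    qed
    have h2: "Ra - Rst \<ge> - \<kappa>2 * g - \<kappa>3 * a\<^sup>2"
    proof -
      have "(1 - \<kappa>1) * (Ra - Rst + X) \<ge> 0" using \<kappa>1 sg by simp
      thus ?thesis using src by (simp add: algebra_simps)
    qed
    have h4: "g \<le> b + \<delta>"
    proof -
      have "g \<le> b + norm (u\<delta> - B cstar sstar)" unfolding g_def b_def
        using norm_triangle_ineq[of "B c\<alpha> s\<alpha> - u\<delta>" "u\<delta> - B cstar sstar"] by simp
      moreover have "norm (u\<delta> - B cstar sstar) \<le> \<delta>" using H ustar_def by (simp add: norm_minus_commute)
      ultimately show ?thesis by simp
    qed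
    have h5: "a \<le> d + \<epsilon>"
    proof -
      have "a \<le> d + norm (sm - sstar)" unfolding a_def d_def
        using norm_triangle_ineq[of "s\<alpha> - sm" "sm - sstar"] by simp
      moreover have "norm (sm - sstar) \<le> \<epsilon>" using H by (simp add: norm_minus_commute)
      ultimately show ?thesis by simp
    qed
    have "a\<^sup>2 \<le> K0 * e" unfolding K0_def
      by (rule core[OF \<gamma>_pos \<kappa>2 \<kappa>3(1) k3a _ _ _ al de h1 h2 h4 h5])
         (auto simp: a_def b_def d_def)
    hence "sqrt (a\<^sup>2) \<le> sqrt (K0 * e)" by (rule real_sqrt_le_mono)
    hence "a \<le> sqrt K0 * sqrt e" by (simp add: a_def real_sqrt_mult)
    thus "norm (s\<alpha> - sstar) \<le> sqrt K0 * sqrt (\<delta> + \<epsilon>)" unfolding a_def e_def .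
  qed
qed

end
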